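(* Let $h$ be an admissible perturbation. Then $\psi^h$ is strictly convex on $\Pi_h$, its unique minimizer $\pi^h$ lies in $\mathrm{int}(\Pi_h)$ and satisfies $F^h(A\pi^h)=\pi^h$. Moreover, for every $\pi\in\mathrm{int}(\Pi_h)$ one has $F^h(A\pi)\in\mathrm{int}(\Pi_h)$ and $$\Upsilon(\pi):=\big(\tilde\nabla h(F^h(A\pi))-\tilde\nabla h(\pi)\big)'\big(F^h(A\pi)-\pi\big)\ge0,$$ with equality if and only if $\pi=\pi^h$.
   Context: Network: $\mathcal G=(\mathcal V,\mathcal E)$ is a finite directed graph with $\mathcal V=\{0,1,\dots,n\}$, containing no directed cycle, in which node $0$ is the unique node with no incoming link, node $n$ is the unique node with no outgoing link, there is a directed path from every node to $n$, and every link $(u,v)\in\mathcal E$ satisfies $u<v$. Each link $e$ has a flow-density function $\mu_e:[0,\infty)\to[0,\infty)$ that is continuously differentiable, strictly increasing, strictly concave, with $\mu_e(0)=0$ and $\mu_e'(0)<\infty$; its capacity is $C_e:=\lim_{\rho\to\infty}\mu_e(\rho)\in(0,+\infty]$; $\mathcal F:=\prod_{e\in\mathcal E}[0,C_e)$. The delay is $T_e(f_e)=\mu_e^{-1}(f_e)/f_e$ for $0<f_e<C_e$, $T_e(0)=1/\mu_e'(0)$, $T_e(f_e)=+\infty$ for $f_e\ge C_e$; $T(f):=(T_e(f_e))_e$. $\mathcal P$ is the set of directed paths from $0$ to $n$, $A\in\{0,1\}^{\mathcal E\times\mathcal P}$ the link-path incidence matrix ($A_{ep}=1$ iff $e\in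 p$), $\mathcal S(\mathcal P)=\{\pi\in\mathbb R_+^{\mathcal P}:\sum_p\pi_p=1\}$, $\Pi:=\{\pi\in\mathcal S(\mathcal P):(A\pi)_e<C_e\ \forall e\}$. The min-cut capacity $C^*:=\min\{\sum_{(u,v)\in\mathcal E:u\in\mathcal U,v\notin\mathcal U}C_{(u,v)}:\mathcal U\subseteq\mathcal V,0\in\mathcal U,n\notin\mathcal U\}$ is assumed to satisfy $C^*>1$. Perturbation: $\Phi:=I-|\mathcal P|^{-1}\mathbf 1\mathbf 1'$; interiors $\mathrm{int}$ and boundaries $\partial$ of subsets of $\mathcal S(\mathcal P)$ are relative to the hyperplane $\{x:\mathbf 1'x=1\}$. An admissible perturbation is a function $h:\Pi_h\to\mathbb R$, where $\Pi_h\subseteq\Pi$ is closed in $\mathbb R^{\mathcal P}$, convex, with nonempty interior, $h$ is strictly convex, twice differentiable on $\mathrm{int}(\Pi_h)$, and $\|\tilde\nabla h(\pi)\|\to+\infty$ as $\pi\to\partial\Pi_h$, where $\tilde\nabla h:=\Phi\nabla h$. Its perturbed best response is $F^h(f):=\arg\min_{\omega\in\Pi_h}\{\omega'A'T(f)+h(\omega)\}$ for $f\in\mathcal F$. Define $\psi^h(\pi):=\sum_{e\in\mathcal E}\int_0^{(A\pi)_e}T_e(s)\,ds+h(\pi)$ for $\pi\in\Pi_h$. *)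

theory Defs
  imports "HOL-Analysis.Analysis"
begin

definition strict_convex_on :: "'a::real_vector set \<Rightarrow> ('a \<Rightarrow> real) \<Rightarrow> bool" where
  "strict_convex_on S f \<longleftrightarrow>
     (\<forall>x\<in>S. \<forall>y\<in>S. x \<noteq> y \<longrightarrow> (\<forall>t::real. 0 < t \<and> t < 1 \<longrightarrow>
        f ((1 - t) *\<^sub>R x + t *\<^sub>R y) < (1 - t) * f x + t * f y))"

definition strict_concave_on :: "'a::real_vector set \<Rightarrow> ('a \<Rightarrow> real) \<Rightarrow> bool" where
  "strict_concave_on S f \<longleftrightarrow> strict_convex_on S (\<lambda>x. - f x)"

type_synonym link = "nat \<times> nat"

definition Paths :: "link set \<Rightarrow> nat \<Rightarrow> nat list set" where
  "Paths E n = {l. l \<noteq> [] \<and> hd l = 0 \<and> last l = n \<and> set (zip l (tl l)) \<subseteq> E}"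

definition path_links :: "nat list \<Rightarrow> link set" where
  "path_links l = set (zip l (tl l))"

definition cap :: "(link \<Rightarrow> real \<Rightarrow> real) \<Rightarrow> link \<Rightarrow> ereal" where
  "cap mu e = Lim at_top (\<lambda>r. ereal (mu e r))"

text \<open>Min-cut capacity (infimum over cuts; INF of the empty set is +oo).\<close>
definition mincut :: "link set \<Rightarrow> nat \<Rightarrow> (link \<Rightarrow> real \<Rightarrow> real) \<Rightarrow> ereal" where
  "mincut E n mu = (INF U\<in>{U. U \<subseteq> {0..n} \<and> 0 \<in> U \<and> n \<notin> U}.
       (\<Sum>e\<in>{e\<in>E. fst e \<in> U \<and> snd e \<notin> U}. cap mu e))"

text \<open>Delay T_e(f). Only evaluated for 0 <= f < C_e (where it is finite).
  dmu e is the derivative of mu e on [0,oo).\<close>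
definition delay :: "(link \<Rightarrow> real \<Rightarrow> real) \<Rightarrow> (link \<Rightarrow> real \<Rightarrow> real) \<Rightarrow> link \<Rightarrow> real \<Rightarrow> real" where
  "delay mu dmu e f = (if f = 0 then 1 / dmu e 0 else the_inv_into {0..} (mu e) f / f)"

text \<open>Link-path incidence: (A pi)_e, paths indexed by a finite type 'p via pth.\<close>
definition Aflow :: "('p::finite \<Rightarrow> nat list) \<Rightarrow> real^'p \<Rightarrow> link \<Rightarrow> real" where
  "Aflow pth \<pi> e = (\<Sum>p\<in>UNIV. if e \<in> path_links (pth p) then \<pi> $ p else 0)"

definition simplexP :: "(real^'p::finite) set" where
  "simplexP = {\<pi>. (\<forall>p. 0 \<le> \<pi> $ p) \<and> (\<Sum>p\<in>UNIV. \<pi> $ p) = 1}"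

definition hyperP :: "(real^'p::finite) set" where
  "hyperP = {x. (\<Sum>p\<in>UNIV. x $ p) = 1}"

definition hint :: "(real^'p::finite) set \<Rightarrow> (real^'p) set" where
  "hint X = (top_of_set hyperP) interior_of X"

definition hbd :: "(real^'p::finite) set \<Rightarrow> (real^'p) set" where
  "hbd X = (top_of_set hyperP) frontier_of X"

definition PiSet :: "link set \<Rightarrow> (link \<Rightarrow> real \<Rightarrow> real) \<Rightarrow> ('p::finite \<Rightarrow> nat list) \<Rightarrow> (real^'p) set" where
  "PiSet E mu pth = {\<pi>\<in>simplexP. \<forall>e\<in>E. ereal (Aflow pth \<pi> e) < cap mu e}"

definition Phi :: "real^'p::finite \<Rightarrow> real^'p" where
  "Phi x = (\<chi> i. x $ i - (\<Sum>j\<in>UNIV. x $ j) / real CARD('p))"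

definition br_obj :: "link set \<Rightarrow> (link \<Rightarrow> real \<Rightarrow> real) \<Rightarrow> (link \<Rightarrow> real \<Rightarrow> real) \<Rightarrow>
    ('p::finite \<Rightarrow> nat list) \<Rightarrow> (real^'p \<Rightarrow> real) \<Rightarrow> (link \<Rightarrow> real) \<Rightarrow> real^'p \<Rightarrow> real" where
  "br_obj E mu dmu pth h f \<omega> = (\<Sum>e\<in>E. Aflow pth \<omega> e * delay mu dmu e (f e)) + h \<omega>"

definition Fh :: "link set \<Rightarrow> (link \<Rightarrow> real \<Rightarrow> real) \<Rightarrow> (link \<Rightarrow> real \<Rightarrow> real) \<Rightarrow>
    ('p::finite \<Rightarrow> nat list) \<Rightarrow> (real^'p) set \<Rightarrow> (real^'p \<Rightarrow> real) \<Rightarrow> (link \<Rightarrow> real) \<Rightarrow> real^'p" where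
  "Fh E mu dmu pth Pih h f = (THE \<omega>. \<omega> \<in> Pih \<and>
      (\<forall>\<omega>'\<in>Pih. br_obj E mu dmu pth h f \<omega> \<le> br_obj E mu dmu pth h f \<omega>'))"

definition psi :: "link set \<Rightarrow> (link \<Rightarrow> real \<Rightarrow> real) \<Rightarrow> (link \<Rightarrow> real \<Rightarrow> real) \<Rightarrow>
    ('p::finite \<Rightarrow> nat list) \<Rightarrow> (real^'p \<Rightarrow> real) \<Rightarrow> real^'p \<Rightarrow> real" where
  "psi E mu dmu pth h \<pi> = (\<Sum>e\<in>E. integral {0..Aflow pth \<pi> e} (delay mu dmu e)) + h \<pi>"

end

theory Submission
  imports Defs
begin


definition cvx :: "'a::real_vector set \<Rightarrow> ('a \<Rightarrow> real) \<Rightarrow> bool" where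
  "cvx K G \<longleftrightarrow> (\<forall>x\<in>K. \<forall>y\<in>K. \<forall>t::real. 0 \<le> t \<and> t \<le> 1 \<longrightarrow>
        G ((1 - t) *\<^sub>R x + t *\<^sub>R y) \<le> (1 - t) * G x + t * G y)"

lemma strict_imp_cvx: "strict_convex_on K G \<Longrightarrow> cvx K G"
  unfolding cvx_def
proof (intro ballI allI impI)
  fix x y and t::real
  assume s: "strict_convex_on K G"
    and xy: "x \<in> K" "y \<in> K" and t: "0 \<le> t \<and> t \<le> 1"
  show "G ((1 - t) *\<^sub>R x + t *\<^sub>R y) \<le> (1 - t) * G x + t * G y"
  proof (cases "x = y")
    case True
    have e: "(1 - t) *\<^sub>R x + t *\<^sub>R x = x" by (rule scaleR_collapse)
    have "(1 - t) * G x + t * G x = G x" by (simp add: algebra_simps)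
    then show ?thesis using True e by simp
  next
    case False
    show ?thesis
    proof (cases "t = 0 \<or> t = 1")
      case True then show ?thesis by auto
    next
      case F2: False
      hence "0 < t" "t < 1" using t by auto
      then show ?thesis using s xy False unfolding strict_convex_on_def
        by (meson less_imp_le)
    qed
  qed
qed

lemma comb_eq: "(1 - t) *\<^sub>R z + t *\<^sub>R x = z + t *\<^sub>R (x - z)" for z x :: "'a::real_vector"
  by (simp add: algebra_simps)

lemma tangent_ineq:
  fixes G :: "'a::real_inner \<Rightarrow> real"
  assumes K: "convex K" and z: "z\<in>K" and x: "x\<in>K"
  and cv: "cvx K G" and D: "(G has_derivative (\<lambda>y. g \<bullet> y)) (at z within K)"
  shows "G z + g \<bullet> (x - z) \<le> G x"
proof (rule ccontr)
  assume A: "\<not> ?thesis"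
  define d where "d = x - z"
  have dn: "d \<noteq> 0" using A unfolding d_def by auto
  hence nd: "norm d > 0" by simp
  define \<epsilon> where "\<epsilon> = (g \<bullet> d - (G x - G z))/2"
  have ep: "\<epsilon> > 0" using A unfolding \<epsilon>_def d_def by auto
  have DD: "\<forall>e>0. \<exists>d>0. \<forall>y\<in>K. norm(y - z) < d \<longrightarrow> norm (G y - G z - g \<bullet> (y - z)) \<le> e * norm (y - z)"
    using D unfolding has_derivative_within_alt by blast
  have pe: "\<epsilon>/norm d > 0" using ep nd by simp
  obtain \<delta> where dl: "\<delta> > 0" and H: "\<forall>y\<in>K. norm(y - z) < \<delta> \<longrightarrow>
      norm (G y - G z - g \<bullet> (y - z)) \<le> (\<epsilon>/norm d) * norm (y - z)"
    using DD[rule_format, OF pe] by blast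
  define t where "t = min 1 (\<delta>/(2*norm d))"
  have t0: "t > 0" "t \<le> 1" using dl nd unfolding t_def by auto
  have tn: "t * norm d < \<delta>"
  proof -
    have "t * norm d \<le> (\<delta>/(2*norm d)) * norm d" unfolding t_def
      using nd by (intro mult_right_mono) auto
    also have "\<dots> = \<delta>/2" using nd by simp
    finally show ?thesis using dl by simp
  qed
  define y where "y = (1 - t) *\<^sub>R z + t *\<^sub>R x"
  have yK: "y \<in> K" unfolding y_def using K z x t0 by (simp add: convex_def)
  have yz: "y - z = t *\<^sub>R d" unfolding y_def d_def by (simp add: algebra_simps)
  have c1: "G y \<le> (1 - t) * G z + t * G x" using cv[unfolded cvx_def, rule_format, OF z x] t0 unfolding y_def by simp
  have ny: "norm (y - z) = t * norm d" using yz t0 by simp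
  have "norm (G y - G z - g \<bullet> (y - z)) \<le> (\<epsilon>/norm d) * norm (y - z)"
    using H[rule_format, OF yK] ny tn by simp
  also have "\<dots> = \<epsilon> * t" using yz t0 nd by simp
  finally have "G y - G z - t * (g \<bullet> d) \<ge> - (\<epsilon> * t)" using yz by (auto simp: abs_le_iff)
  with c1 have "t * (g \<bullet> d) - \<epsilon> * t \<le> t * (G x - G z)" by (simp add: algebra_simps)
  hence "t * (g \<bullet> d - \<epsilon>) \<le> t * (G x - G z)" by (simp add: algebra_simps)
  hence "g \<bullet> d - \<epsilon> \<le> G x - G z" using t0 by simp
  thus False using ep unfolding \<epsilon>_def by (simp add: field_simps)
qed

lemma tangent_strict:
  fixes G :: "'a::real_inner \<Rightarrow> real"
  assumes K: "convex K" and z: "z\<in>K" and x: "x\<in>K" and xz: "x \<noteq> z"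
  and sc: "strict_convex_on K G" and D: "(G has_derivative (\<lambda>y. g \<bullet> y)) (at z within K)"
  shows "G z + g \<bullet> (x - z) < G x"
proof -
  define m where "m = (1 - 1/2) *\<^sub>R z + (1/2::real) *\<^sub>R x"
  have mK: "m \<in> K" unfolding m_def using K z x by (simp add: convex_def)
  have "G z + g \<bullet> (m - z) \<le> G m" using tangent_ineq[OF K z mK strict_imp_cvx[OF sc] D] .
  moreover have "G m < (1 - 1/2) * G z + (1/2) * G x"
    using sc[unfolded strict_convex_on_def, rule_format, OF z x xz[symmetric], of "1/2"] unfolding m_def by simp
  moreover have "m - z = (1/2::real) *\<^sub>R (x - z)" unfolding m_def comb_eq by simp
  ultimately show ?thesis by (simp add: inner_scaleR_right)
qed

lemma hint_iff:
  fixes X :: "(real^'p::finite) set"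
  shows "x \<in> hint X \<longleftrightarrow> x \<in> X \<and> x \<in> hyperP \<and> (\<exists>e>0. ball x e \<inter> hyperP \<subseteq> X)"
proof
  assume "x \<in> hint X"
  then obtain T where T: "openin (top_of_set hyperP) T" "x \<in> T" "T \<subseteq> X"
    unfolding hint_def interior_of_def by auto
  then obtain U where U: "open U" "T = hyperP \<inter> U" by (auto simp: openin_open)
  then obtain e where "e>0" "ball x e \<subseteq> U" using T(2) open_contains_ball by blast
  then show "x \<in> X \<and> x \<in> hyperP \<and> (\<exists>e>0. ball x e \<inter> hyperP \<subseteq> X)"
    using T U by blast
next
  assume "x \<in> X \<and> x \<in> hyperP \<and> (\<exists>e>0. ball x e \<inter> hyperP \<subseteq> X)"
  then obtain e where e: "e>0" "ball x e \<inter> hyperP \<subseteq> X" "x \<in> hyperP" by auto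
  have "openin (top_of_set hyperP) (hyperP \<inter> ball x e)" by (auto simp: openin_open)
  then show "x \<in> hint X" unfolding hint_def interior_of_def using e by auto
qed

lemma sum_vec_add: "(\<Sum>p\<in>UNIV. (x + y) $ p) = (\<Sum>p\<in>UNIV. x $ p) + (\<Sum>p\<in>UNIV. y $ p)"
  for x y :: "real^'p::finite" by (simp add: sum.distrib)
lemma sum_vec_diff: "(\<Sum>p\<in>UNIV. (x - y) $ p) = (\<Sum>p\<in>UNIV. x $ p) - (\<Sum>p\<in>UNIV. y $ p)"
  for x y :: "real^'p::finite" by (simp add: sum_subtractf)
lemma sum_vec_scale: "(\<Sum>p\<in>UNIV. (c *\<^sub>R x) $ p) = c * (\<Sum>p\<in>UNIV. x $ p)"
  for x :: "real^'p::finite" by (simp add: sum_distrib_left)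

lemma hyperP_iff: "x \<in> hyperP \<longleftrightarrow> (\<Sum>p\<in>UNIV. x $ p) = 1" by (simp add: hyperP_def)

lemma Phi_sum: "(\<Sum>p\<in>UNIV. Phi v $ p) = 0"
  for v :: "real^'p::finite"
  by (simp add: Phi_def sum_subtractf)

lemma Phi_inner: fixes v d :: "real^'p::finite"
  assumes "(\<Sum>p\<in>UNIV. d $ p) = 0"
  shows "Phi v \<bullet> d = v \<bullet> d"
proof -
  have "Phi v \<bullet> d = (\<Sum>i\<in>UNIV. (v $ i - (\<Sum>j\<in>UNIV. v $ j) / real CARD('p)) * d $ i)"
    by (simp add: Phi_def inner_vec_def)
  also have "\<dots> = (\<Sum>i\<in>UNIV. v $ i * d $ i) - ((\<Sum>j\<in>UNIV. v $ j) / real CARD('p)) * (\<Sum>i\<in>UNIV. d $ i)"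
    by (simp add: left_diff_distrib sum_subtractf sum_distrib_left)
  also have "\<dots> = v \<bullet> d" using assms by (simp add: inner_vec_def)
  finally show ?thesis .
qed

lemma Phi_add: "Phi (a + b) = Phi a + Phi b" for a b :: "real^'p::finite"
  by (simp add: Phi_def vec_eq_iff sum.distrib add_divide_distrib)

lemma Phi_self: "Phi v \<bullet> Phi v = v \<bullet> Phi v" for v :: "real^'p::finite"
  by (rule Phi_inner[OF Phi_sum])

lemma hyper_diff: "x \<in> hyperP \<Longrightarrow> y \<in> hyperP \<Longrightarrow> (\<Sum>p\<in>UNIV. (x - y) $ p) = 0"
  by (simp add: hyperP_iff sum_subtractf)

lemma interior_min_stationary:
  fixes G :: "real^'p::finite \<Rightarrow> real"
  assumes sub: "K \<subseteq> hyperP" and z: "z \<in> hint K" and mn: "\<forall>x\<in>K. G z \<le> G x"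
    and D: "(G has_derivative (\<lambda>y. g \<bullet> y)) (at z within K)"
  shows "Phi g = 0"
proof (rule ccontr)
  assume vn: "Phi g \<noteq> 0"
  define v where "v = Phi g"
  have nv: "norm v > 0" using vn v_def by simp
  obtain \<epsilon> where ep: "\<epsilon> > 0" "ball z \<epsilon> \<inter> hyperP \<subseteq> K" and zK: "z \<in> K" and zH: "z \<in> hyperP"
    using z hint_iff by metis
  have DD: "\<forall>e>0. \<exists>d>0. \<forall>y\<in>K. norm(y - z) < d \<longrightarrow> norm (G y - G z - g \<bullet> (y - z)) \<le> e * norm (y - z)"
    using D unfolding has_derivative_within_alt by blast
  have pe: "norm v / 2 > 0" using nv by simp
  obtain \<delta> where dl: "\<delta> > 0" and H: "\<forall>y\<in>K. norm(y - z) < \<delta> \<longrightarrow>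
      norm (G y - G z - g \<bullet> (y - z)) \<le> (norm v / 2) * norm (y - z)"
    using DD[rule_format, OF pe] by blast
  define t where "t = min \<epsilon> \<delta> / (2 * norm v)"
  have t0: "t > 0" using ep dl nv unfolding t_def by simp
  have tv0: "t * norm v = min \<epsilon> \<delta> / 2" using nv unfolding t_def by simp
  have tv: "t * norm v < min \<epsilon> \<delta>" unfolding tv0 using ep dl by (simp add: min_def)
  define y where "y = z - t *\<^sub>R v"
  have yz: "y - z = - (t *\<^sub>R v)" unfolding y_def by simp
  have ny: "norm (y - z) = t * norm v" using yz t0 by simp
  have "(\<Sum>p\<in>UNIV. y $ p) = (\<Sum>p\<in>UNIV. z $ p) - t * (\<Sum>p\<in>UNIV. v $ p)"
    unfolding y_def by (simp only: sum_vec_diff sum_vec_scale)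
  hence yH: "y \<in> hyperP" using zH unfolding v_def hyperP_iff by (simp add: Phi_sum)
  have yK: "y \<in> K" using ep(2) yH ny tv by (auto simp: dist_norm norm_minus_commute)
  have "norm (G y - G z - g \<bullet> (y - z)) \<le> (norm v / 2) * norm (y - z)"
    using H[rule_format, OF yK] ny tv by simp
  moreover have "g \<bullet> (y - z) = - t * (norm v)^2"
  proof -
    have "g \<bullet> (y - z) = - t * (g \<bullet> v)" using yz by (simp add: inner_minus_right)
    also have "g \<bullet> v = v \<bullet> v" unfolding v_def using Phi_self[of g] by (simp add: inner_commute)
    finally show ?thesis by (simp add: power2_norm_eq_inner)
  qed
  ultimately have A: "\<bar>G y - G z + t * (norm v)^2\<bar> \<le> (norm v / 2) * (t * norm v)"
    using ny by simp
  have "G y - G z \<le> - t * (norm v)^2 + (norm v / 2) * (t * norm v)"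
    using A abs_ge_self[of "G y - G z + t * (norm v)^2"] by linarith
  also have "\<dots> = - t * (norm v)^2 / 2" by (simp add: power2_eq_square)
  also have "\<dots> < 0" using t0 nv by simp
  finally show False using mn yK by force
qed

lemma segment_hint:
  fixes K :: "(real^'p::finite) set"
  assumes K: "convex K" "K \<subseteq> hyperP" and b: "b \<in> K" and z: "z \<in> hint K" and t: "0 < t" "t \<le> 1"
  shows "b + t *\<^sub>R (z - b) \<in> hint K"
proof -
  obtain \<epsilon> where ep: "\<epsilon> > 0" "ball z \<epsilon> \<inter> hyperP \<subseteq> K" and zK: "z \<in> K" and zH: "z \<in> hyperP"
    using z hint_iff by metis
  define x where "x = b + t *\<^sub>R (z - b)"
  have bH: "b \<in> hyperP" using b K by auto
  have xK: "x \<in> K" using K(1) b zK t unfolding x_def comb_eq[symmetric] by (simp add: convex_def)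
  have xH: "x \<in> hyperP" using xK K by auto
  have "ball x (t * \<epsilon>) \<inter> hyperP \<subseteq> K"
  proof
    fix y assume y: "y \<in> ball x (t * \<epsilon>) \<inter> hyperP"
    define w where "w = b + (1/t) *\<^sub>R (y - b)"
    have yw: "y = (1 - t) *\<^sub>R b + t *\<^sub>R w" unfolding comb_eq w_def using t by simp
    have "w - z = (1/t) *\<^sub>R (y - x)" unfolding w_def x_def using t by (simp add: algebra_simps)
    hence "norm (w - z) = norm (y - x) / t" using t by simp
    also have "\<dots> < \<epsilon>" using y t by (simp add: dist_norm norm_minus_commute pos_divide_less_eq mult.commute)
    finally have wb: "w \<in> ball z \<epsilon>" by (simp add: dist_norm norm_minus_commute)
    have "(\<Sum>p\<in>UNIV. w $ p) = (\<Sum>p\<in>UNIV. b $ p) + (1/t) * ((\<Sum>p\<in>UNIV. y $ p) - (\<Sum>p\<in>UNIV. b $ p))"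
      unfolding w_def by (simp only: sum_vec_add sum_vec_scale sum_vec_diff)
    moreover have "(\<Sum>p\<in>UNIV. y $ p) = 1" using y by (simp add: hyperP_iff)
    ultimately have "w \<in> hyperP" using bH unfolding hyperP_iff by simp
    with wb ep have "w \<in> K" by auto
    thus "y \<in> K" using yw K(1) b t by (simp add: convex_def)
  qed
  moreover have "t * \<epsilon> > 0" using t ep by simp
  ultimately show ?thesis using xK xH hint_iff unfolding x_def[symmetric] by metis
qed


lemma closed_hyperP: "closed (hyperP :: (real^'p::finite) set)"
proof -
  have "hyperP = {x::real^'p. (\<Sum>p\<in>UNIV. x $ p) = 1}" by (simp add: hyperP_def)
  moreover have "closed {x::real^'p. (\<Sum>p\<in>UNIV. x $ p) = 1}"
    by (intro closed_Collect_eq continuous_intros)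
  ultimately show ?thesis by simp
qed

lemma exists_interior_min:
  fixes G :: "real^'p::finite \<Rightarrow> real" and gG gh :: "real^'p \<Rightarrow> real^'p"
  assumes Kc: "compact K" and Kv: "convex K" and KH: "K \<subseteq> hyperP" and ne: "hint K \<noteq> {}"
  and cv: "cvx K G"
  and D: "\<forall>x\<in>hint K. (G has_derivative (\<lambda>y. gG x \<bullet> y)) (at x within K)"
  and Cb: "\<forall>x\<in>hint K. norm (Phi (gh x)) \<le> norm (Phi (gG x)) + C"
  and blow: "\<forall>b\<in>K - hint K. filterlim (\<lambda>x. norm (Phi (gh x))) at_top (at b within hint K)"
  shows "\<exists>x\<in>hint K. \<forall>y\<in>K. G x \<le> G y"
proof -
  obtain z where z: "z \<in> hint K" using ne by auto
  have hK: "hint K \<subseteq> K" using hint_iff by blast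
  have zK: "z \<in> K" using z hK by auto
  have cont: "\<forall>x\<in>hint K. continuous (at x within K) G"
    using D has_derivative_continuous by blast
  obtain B where B: "\<forall>x\<in>K. norm x \<le> B" using compact_imp_bounded[OF Kc] bounded_iff by metis
  have lb: "\<forall>x\<in>K. G z - norm (gG z) * (2*B) \<le> G x"
  proof
    fix x assume xK: "x \<in> K"
    have t: "G z + gG z \<bullet> (x - z) \<le> G x" using tangent_ineq[OF Kv zK xK cv] D z by blast
    have "norm (x - z) \<le> 2*B" using B[rule_format, OF xK] B[rule_format, OF zK] norm_triangle_ineq4[of x z] by linarith
    hence "norm (gG z) * norm (x - z) \<le> norm (gG z) * (2*B)" by (simp add: mult_left_mono)
    moreover have "- (norm (gG z) * norm (x - z)) \<le> gG z \<bullet> (x - z)"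
      using norm_cauchy_schwarz[of "- gG z" "x - z"] by simp
    ultimately show "G z - norm (gG z) * (2*B) \<le> G x" using t by linarith
  qed
  define m where "m = Inf (G ` K)"
  have bdd: "bdd_below (G ` K)" using lb by (auto intro: bdd_belowI2)
  have Kne: "G ` K \<noteq> {}" using zK by auto
  have mle: "\<forall>x\<in>K. m \<le> G x" unfolding m_def using bdd by (auto intro: cInf_lower)
  have "\<forall>n::nat. \<exists>x\<in>K. G x < m + inverse (real (Suc n))"
  proof
    fix n :: nat
    have "Inf (G ` K) < m + inverse (real (Suc n))" unfolding m_def by simp
    then have "\<exists>y\<in>G ` K. y < m + inverse (real (Suc n))"
      using cInf_less_iff[OF Kne bdd] by blast
    then show "\<exists>x\<in>K. G x < m + inverse (real (Suc n))" by blast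
  qed
  then obtain xs where xs: "\<And>n. xs n \<in> K" "\<And>n. G (xs n) < m + inverse (real (Suc n))"
    by metis
  obtain l r where lK: "l \<in> K" and r: "strict_mono r" and lim: "(xs \<circ> r) \<longlonglongrightarrow> l"
    using compact_imp_seq_compact[OF Kc] xs(1) unfolding seq_compact_def by metis
  have inv0: "(\<lambda>n. m + inverse (real (Suc n))) \<longlonglongrightarrow> m"
    using tendsto_add[OF tendsto_const LIMSEQ_inverse_real_of_nat] by simp
  have Gl: "(\<lambda>n. G (xs (r n))) \<longlonglongrightarrow> m"
  proof (rule tendsto_sandwich[of "\<lambda>n. m" _ _ "\<lambda>n. m + inverse (real (Suc (r n)))"])
    show "\<forall>\<^sub>F n in sequentially. m \<le> G (xs (r n))" using mle xs(1) by auto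
    show "\<forall>\<^sub>F n in sequentially. G (xs (r n)) \<le> m + inverse (real (Suc (r n)))"
      using xs(2) by (intro always_eventually allI less_imp_le) blast
    show "(\<lambda>n. m) \<longlonglongrightarrow> m" by simp
    show "(\<lambda>n. m + inverse (real (Suc (r n)))) \<longlonglongrightarrow> m"
      using LIMSEQ_subseq_LIMSEQ[OF inv0 r] by (simp add: o_def)
  qed
  show ?thesis
  proof (cases "l \<in> hint K")
    case True
    have "(\<lambda>n. G ((xs \<circ> r) n)) \<longlonglongrightarrow> G l"
      using continuous_within_tendsto_compose'[of l K G "xs \<circ> r" sequentially] cont True xs(1) lim
      by auto
    hence "G l = m" using Gl LIMSEQ_unique by (simp add: o_def)
    thus ?thesis using True mle by auto
  next
    case False
    define xt where "xt t = l + t *\<^sub>R (z - l)" for t :: real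
    have xth: "xt t \<in> hint K" if "0 < t" "t \<le> 1" for t
      unfolding xt_def using segment_hint[OF Kv KH lK z that] .
    have zl: "z \<noteq> l" using z False by auto
    have claim1: "G (xt t) \<le> (1 - t) * m + t * G z" if t: "0 < t" "t \<le> 1" for t
    proof -
      define ys where "ys n = (1 - t) *\<^sub>R xs (r n) + t *\<^sub>R z" for n
      have ysK: "ys n \<in> K" for n unfolding ys_def using Kv xs(1) zK t by (simp add: convex_def)
      have "ys \<longlonglongrightarrow> (1 - t) *\<^sub>R l + t *\<^sub>R z"
        unfolding ys_def using lim by (auto intro!: tendsto_intros simp: o_def)
      hence ysl: "ys \<longlonglongrightarrow> xt t" unfolding xt_def comb_eq by simp
      have c1: "(\<lambda>n. G (ys n)) \<longlonglongrightarrow> G (xt t)"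
        using continuous_within_tendsto_compose'[of "xt t" K G ys sequentially] cont xth[OF t] ysK ysl
        by auto
      have c2: "(\<lambda>n. (1 - t) * G (xs (r n)) + t * G z) \<longlonglongrightarrow> (1 - t) * m + t * G z"
        using Gl by (auto intro!: tendsto_intros)
      have "\<forall>n. G (ys n) \<le> (1 - t) * G (xs (r n)) + t * G z"
        using cv[unfolded cvx_def] xs(1) zK t unfolding ys_def by simp
      thus ?thesis using LIMSEQ_le[OF c1 c2] by auto
    qed
    have claim2: "0 \<le> gG (xt t) \<bullet> (z - l)" if t: "0 < t" "t < 1" for t
    proof (rule ccontr)
      assume neg: "\<not> ?thesis"
      define d where "d = - (gG (xt t) \<bullet> (z - l))"
      have d0: "d > 0" using neg d_def by simp
      have Gzm: "m \<le> G z" using mle zK by auto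
      define A where "A = G z - m + d"
      have A0: "A > 0" using d0 Gzm A_def by simp
      define s where "s = t * d / (2 * A)"
      have s0: "s > 0" using t d0 A0 s_def by simp
      have "s \<le> t / 2"
      proof -
        have "d \<le> A" using Gzm A_def by simp
        hence "t * d \<le> t * A" using t by (simp add: mult_left_mono)
        thus ?thesis unfolding s_def using A0 by (simp add: field_simps)
      qed
      hence st: "s < t" using t by simp
      have xsK: "xt s \<in> K" using xth[of s] s0 st t hK by auto
      have tg: "G (xt t) + gG (xt t) \<bullet> (xt s - xt t) \<le> G (xt s)"
        using tangent_ineq[OF Kv _ xsK cv, of "xt t" "gG (xt t)"] xth[of t] t hK D by auto
      have e: "xt s - xt t = (s - t) *\<^sub>R (z - l)" unfolding xt_def by (simp add: algebra_simps)
      have "gG (xt t) \<bullet> (xt s - xt t) = (s - t) * (gG (xt t) \<bullet> (z - l))"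
        by (simp only: e inner_scaleR_right)
      hence "gG (xt t) \<bullet> (xt s - xt t) = (t - s) * d" unfolding d_def by (simp add: algebra_simps)
      hence "G (xt s) \<ge> m + (t - s) * d" using tg claim1[of t] mle xth[of t] t hK by force
      moreover have "G (xt s) \<le> (1 - s) * m + s * G z" using claim1[of s] s0 st t by simp
      ultimately have "(t - s) * d \<le> s * (G z - m)" by (simp add: algebra_simps)
      moreover have "s * (G z - m) = t * d / 2 - s * d"
        unfolding s_def A_def using A0 A_def by (simp add: field_simps)
      ultimately have "t * d \<le> t * d / 2" by (simp add: algebra_simps)
      thus False using t d0 by simp
    qed
    obtain \<epsilon> where ep: "\<epsilon> > 0" "ball z \<epsilon> \<inter> hyperP \<subseteq> K" using z hint_iff by metis
    define r0 where "r0 = \<epsilon> / 2"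
    have r00: "r0 > 0" using ep r0_def by simp
    define S0 where "S0 = cball z r0 \<inter> hyperP"
    have S0h: "S0 \<subseteq> hint K"
    proof
      fix w assume w: "w \<in> S0"
      have "ball w r0 \<inter> hyperP \<subseteq> ball z \<epsilon> \<inter> hyperP"
      proof
        fix x assume x: "x \<in> ball w r0 \<inter> hyperP"
        have "norm (x - z) \<le> norm (x - w) + norm (w - z)" using norm_triangle_ineq[of "x - w" "w - z"] by simp
        moreover have "norm (x - w) < \<epsilon>/2" "norm (w - z) \<le> \<epsilon>/2"
          using x w unfolding S0_def r0_def by (auto simp: dist_norm norm_minus_commute)
        ultimately show "x \<in> ball z \<epsilon> \<inter> hyperP" using x by (simp add: dist_norm norm_minus_commute)
      qed
      hence "ball w r0 \<inter> hyperP \<subseteq> K" using ep by blast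
      moreover have "w \<in> K" "w \<in> hyperP" using w ep r00 unfolding S0_def r0_def by auto
      ultimately show "w \<in> hint K" using hint_iff r00 by metis
    qed
    have S0c: "compact S0" unfolding S0_def using closed_hyperP compact_Int_closed[OF compact_cball] by blast
    have zS0: "z \<in> S0" unfolding S0_def using z hint_iff r00 by auto
    have "continuous_on S0 G"
      unfolding continuous_on_eq_continuous_within
      using cont S0h hK continuous_within_subset by (metis subsetD)
    then obtain w0 where "w0 \<in> S0" "\<forall>w\<in>S0. G w \<le> G w0"
      using continuous_attains_sup[OF S0c] zS0 by blast
    then obtain M where M: "\<forall>w\<in>S0. G w \<le> M" by blast
    have claim3: "norm (Phi (gG (xt t))) * r0 \<le> M - m" if t: "0 < t" "t < 1" for t
    proof (cases "Phi (gG (xt t)) = 0")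
      case True
      then show ?thesis using M zS0 mle zK by force
    next
      case False
      define v where "v = Phi (gG (xt t))"
      have nv: "norm v > 0" using False v_def by simp
      define w where "w = z + (r0 / norm v) *\<^sub>R v"
      have "(\<Sum>p\<in>UNIV. w $ p) = (\<Sum>p\<in>UNIV. z $ p) + (r0 / norm v) * (\<Sum>p\<in>UNIV. v $ p)"
        unfolding w_def by (simp only: sum_vec_add sum_vec_scale)
      moreover have "z \<in> hyperP" using z hint_iff by blast
      ultimately have wH: "w \<in> hyperP" unfolding v_def hyperP_iff by (simp add: Phi_sum)
      have "norm (w - z) = r0" unfolding w_def using nv r00 by simp
      hence wS: "w \<in> S0" unfolding S0_def using wH by (simp add: dist_norm norm_minus_commute)
      have xtK: "xt t \<in> K" using xth[of t] t hK by auto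
      have tg: "G (xt t) + gG (xt t) \<bullet> (w - xt t) \<le> G w"
        using tangent_ineq[OF Kv xtK _ cv, of w "gG (xt t)"] wS S0h hK xth[of t] t D by auto
      have e1: "w - xt t = (1 - t) *\<^sub>R (z - l) + (r0 / norm v) *\<^sub>R v"
        unfolding w_def xt_def by (simp add: algebra_simps)
      have gv: "gG (xt t) \<bullet> v = norm v ^ 2"
        using Phi_inner[OF Phi_sum, of "gG (xt t)" "gG (xt t)"]
        unfolding v_def by (simp add: power2_norm_eq_inner)
      have "gG (xt t) \<bullet> (w - xt t) = (1 - t) * (gG (xt t) \<bullet> (z - l)) + r0 * norm v"
        unfolding e1 using gv nv by (simp add: inner_add_right power2_eq_square)
      moreover have "(1 - t) * (gG (xt t) \<bullet> (z - l)) \<ge> 0" using claim2[OF t] t by simp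
      ultimately have "G (xt t) + r0 * norm v \<le> G w" using tg by linarith
      moreover have "m \<le> G (xt t)" using mle xtK by auto
      moreover have "G w \<le> M" using M wS by auto
      ultimately show ?thesis unfolding v_def by (simp add: algebra_simps)
    qed
    have lKh: "l \<in> K - hint K" using lK False by auto
    have "\<forall>\<^sub>F x in at l within hint K. (M - m) / r0 + C + 1 \<le> norm (Phi (gh x))"
      using blow lKh unfolding filterlim_at_top by blast
    then obtain \<delta> where dl: "\<delta> > 0" and Hd: "\<forall>x\<in>hint K. x \<noteq> l \<and> dist x l < \<delta> \<longrightarrow>
        (M - m) / r0 + C + 1 \<le> norm (Phi (gh x))"
      unfolding eventually_at by blast
    have nzl: "norm (z - l) > 0" using zl by simp
    define t where "t = min (1/2) (\<delta> / (2 * norm (z - l)))"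
    have t0: "0 < t" "t < 1" using dl nzl unfolding t_def by auto
    have "dist (xt t) l = t * norm (z - l)" unfolding xt_def dist_norm using t0 by simp
    also have "\<dots> \<le> (\<delta> / (2 * norm (z - l))) * norm (z - l)" unfolding t_def
      using nzl by (intro mult_right_mono) auto
    also have "\<dots> < \<delta>" using nzl dl by simp
    finally have dxt: "dist (xt t) l < \<delta>" .
    have "xt t \<noteq> l" unfolding xt_def using t0 zl by simp
    hence big: "(M - m) / r0 + C + 1 \<le> norm (Phi (gh (xt t)))"
      using Hd xth[of t] t0 dxt by auto
    have "norm (Phi (gG (xt t))) \<le> (M - m) / r0" using claim3[OF t0] r00 by (simp add: field_simps)
    moreover have "norm (Phi (gh (xt t))) \<le> norm (Phi (gG (xt t))) + C" using Cb xth[of t] t0 by auto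
    ultimately show ?thesis using big by linarith
  qed
qed


locale edge =
  fixes m dm :: "real \<Rightarrow> real"
  assumes md: "\<forall>x\<ge>0. (m has_real_derivative dm x) (at x within {0..})"
  and mm: "strict_mono_on {0..} m"
  and mc: "strict_concave_on {0..} m"
  and m0: "m 0 = 0"
begin

definition g where "g = the_inv_into {0..} m"
definition T where "T f = (if f = 0 then 1 / dm 0 else g f / f)"
definition R where "R = m ` {0..}"
definition F where "F s = integral {0..s} T"

lemma inj: "inj_on m {0..}" using strict_mono_on_imp_inj_on[OF mm] .

lemma gm: "x \<ge> 0 \<Longrightarrow> g (m x) = x" unfolding g_def using the_inv_into_f_f[OF inj] by simp
lemma mg: "f \<in> R \<Longrightarrow> m (g f) = f" unfolding g_def R_def using f_the_inv_into_f[OF inj] by simp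
lemma gR: "f \<in> R \<Longrightarrow> g f \<ge> 0" unfolding g_def R_def using the_inv_into_into[OF inj, of f "{0..}"] by simp
lemma mmono: "0 \<le> x \<Longrightarrow> x < y \<Longrightarrow> m x < m y" using strict_mono_onD[OF mm] by simp
lemma mmono_le: "0 \<le> x \<Longrightarrow> x \<le> y \<Longrightarrow> m x \<le> m y" using mmono by (cases "x = y") (auto intro: less_imp_le)
lemma mpos: "x > 0 \<Longrightarrow> m x > 0" using mmono[of 0 x] m0 by simp
lemma Rnn: "f \<in> R \<Longrightarrow> f \<ge> 0" unfolding R_def using mmono_le[of 0] m0 by auto
lemma g0: "g 0 = 0" using gm[of 0] m0 by simp
lemma R0: "0 \<in> R" unfolding R_def using m0 by force

lemma mcont: "continuous_on {0..} m"
  unfolding continuous_on_eq_continuous_within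
  using md DERIV_continuous by force

lemma conc: "0 \<le> x \<Longrightarrow> 0 \<le> y \<Longrightarrow> 0 \<le> t \<Longrightarrow> t \<le> 1 \<Longrightarrow> (1 - t) * m x + t * m y \<le> m ((1 - t) * x + t * y)"
proof -
  assume a: "0 \<le> x" "0 \<le> y" "0 \<le> t" "t \<le> 1"
  have "cvx {0..} (\<lambda>x. - m x)" using strict_imp_cvx mc unfolding strict_concave_on_def by blast
  then have "- m ((1 - t) *\<^sub>R x + t *\<^sub>R y) \<le> (1 - t) * (- m x) + t * (- m y)"
    unfolding cvx_def using a by auto
  then show ?thesis by simp
qed

lemma tan0: "x \<ge> 0 \<Longrightarrow> m x \<le> dm 0 * x"
proof -
  assume x: "x \<ge> 0"
  have "cvx {0..} (\<lambda>x. - m x)" using strict_imp_cvx mc unfolding strict_concave_on_def by blast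
  moreover have "((\<lambda>x. - m x) has_derivative (\<lambda>y. (- dm 0) \<bullet> y)) (at 0 within {0..})"
  proof -
    have "(m has_derivative (\<lambda>y. dm 0 * y)) (at 0 within {0..})"
      using md unfolding has_field_derivative_def by auto
    then have "((\<lambda>x. - m x) has_derivative (\<lambda>y. - (dm 0 * y))) (at 0 within {0..})"
      by (rule has_derivative_minus)
    then show ?thesis by (simp add: inner_real_def)
  qed
  ultimately have "- m 0 + (- dm 0) \<bullet> (x - 0) \<le> - m x"
    using tangent_ineq[of "{0..}" 0 x "\<lambda>x. - m x" "- dm 0"] x by (simp only: convex_real_interval atLeast_iff order_refl)
  then show ?thesis using m0 by (simp add: inner_real_def)
qed

lemma dm0: "dm 0 > 0"
  using tan0[of 1] mpos[of 1] by simp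

lemma ratio: "0 < x \<Longrightarrow> x \<le> y \<Longrightarrow> m y / y \<le> m x / x"
proof -
  assume a: "0 < x" "x \<le> y"
  define t where "t = x / y"
  have t: "0 \<le> t" "t \<le> 1" using a unfolding t_def by auto
  have "(1 - t) * m 0 + t * m y \<le> m ((1 - t) * 0 + t * y)"
    using conc[of 0 y t] t a by simp
  then have "(x / y) * m y \<le> m x" using a m0 unfolding t_def by simp
  then show ?thesis using a by (simp add: field_simps)
qed

lemma Rint: "f \<in> R \<Longrightarrow> 0 \<le> f' \<Longrightarrow> f' \<le> f \<Longrightarrow> f' \<in> R"
proof -
  assume a: "f \<in> R" "0 \<le> f'" "f' \<le> f"
  have "m 0 \<le> f'" "f' \<le> m (g f)" using a m0 mg by auto
  moreover have "continuous_on {0..g f} m" using mcont continuous_on_subset by fastforce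
  ultimately obtain x where "0 \<le> x" "x \<le> g f" "m x = f'" using IVT'[of m 0 f' "g f"] gR a by auto
  then show ?thesis unfolding R_def by auto
qed

lemma Rup: "f \<in> R \<Longrightarrow> \<exists>f'\<in>R. f < f'"
proof -
  assume a: "f \<in> R"
  have "m (g f) < m (g f + 1)" using mmono gR a by simp
  then show ?thesis using a mg gR unfolding R_def by force
qed

lemma gmono: "f1 \<in> R \<Longrightarrow> f2 \<in> R \<Longrightarrow> f1 \<le> f2 \<Longrightarrow> g f1 \<le> g f2"
proof (rule ccontr)
  assume a: "f1 \<in> R" "f2 \<in> R" "f1 \<le> f2" "\<not> g f1 \<le> g f2"
  then have "m (g f2) < m (g f1)" using mmono gR by simp
  then show False using a mg by simp
qed

lemma gpos: "f \<in> R \<Longrightarrow> 0 < f \<Longrightarrow> 0 < g f"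
proof -
  assume a: "f \<in> R" "0 < f"
  show ?thesis using gR[OF a(1)] mg[OF a(1)] m0 a(2) by (cases "g f = 0") auto
qed

lemma Tpos: "f \<in> R \<Longrightarrow> 0 < T f"
proof -
  assume a: "f \<in> R"
  show ?thesis
  proof (cases "f = 0")
    case True then show ?thesis unfolding T_def using dm0 by simp
  next
    case False
    then have "f > 0" using Rnn[OF a] by simp
    then show ?thesis unfolding T_def using gpos[OF a] False by simp
  qed
qed

lemma Tmono: "f1 \<in> R \<Longrightarrow> f2 \<in> R \<Longrightarrow> f1 \<le> f2 \<Longrightarrow> T f1 \<le> T f2"
proof -
  assume a: "f1 \<in> R" "f2 \<in> R" "f1 \<le> f2"
  show ?thesis
  proof (cases "f2 = 0")
    case True then show ?thesis using a Rnn[of f1] by simp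
  next
    case f2: False
    hence f2p: "f2 > 0" using Rnn[OF a(2)] by simp
    have r2: "g f2 > 0" using gpos a f2p by simp
    have e2: "T f2 = g f2 / m (g f2)" unfolding T_def using mg a f2 by simp
    show ?thesis
    proof (cases "f1 = 0")
      case True
      have "m (g f2) \<le> dm 0 * g f2" using tan0 r2 by simp
      then have "1 / dm 0 \<le> g f2 / m (g f2)" using r2 dm0 mpos[OF r2]
        by (simp add: field_simps)
      then show ?thesis using True e2 unfolding T_def by simp
    next
      case f1: False
      hence f1p: "f1 > 0" using Rnn[OF a(1)] by simp
      have r1: "g f1 > 0" using gpos a f1p by simp
      have e1: "T f1 = g f1 / m (g f1)" unfolding T_def using mg a f1 by simp
      have "m (g f2) / g f2 \<le> m (g f1) / g f1" using ratio[OF r1 gmono[OF a]] .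
      then have "g f1 / m (g f1) \<le> g f2 / m (g f2)" using r1 r2 mpos[OF r1] mpos[OF r2]
        by (simp add: field_simps)
      then show ?thesis using e1 e2 by simp
    qed
  qed
qed


lemma gcont: "s \<in> R \<Longrightarrow> continuous_on {0..s} g"
proof -
  assume s: "s \<in> R"
  define b where "b = g s"
  have b0: "b \<ge> 0" using gR s b_def by simp
  have cm: "continuous_on {0..b} m" by (rule continuous_on_subset[OF mcont]) auto
  have "continuous_on (m ` {0..b}) g" by (rule continuous_on_inv[OF cm compact_Icc]) (use gm in auto)
  moreover have "{0..s} \<subseteq> m ` {0..b}"
  proof
    fix y assume y: "y \<in> {0..s}"
    note cm
    moreover have "m 0 \<le> y" "y \<le> m b" using y m0 mg[OF s] b_def by auto
    ultimately obtain x where "0 \<le> x" "x \<le> b" "m x = y" using IVT'[of m 0 y b] b0 by auto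
    then show "y \<in> m ` {0..b}" by auto
  qed
  ultimately show ?thesis using continuous_on_subset by blast
qed

lemma Tcont: "s \<in> R \<Longrightarrow> continuous_on {0..s} T"
proof -
  assume s: "s \<in> R"
  have s0: "s \<ge> 0" using Rnn s by simp
  have gc: "continuous_on {0..s} g" using gcont s .
  show ?thesis unfolding continuous_on_eq_continuous_within
  proof
    fix x assume x: "x \<in> {0..s}"
    show "continuous (at x within {0..s}) T"
    proof (cases "x = 0")
      case False
      hence xp: "x > 0" using x by simp
      have "continuous_on {x/2..s} g" by (rule continuous_on_subset[OF gc]) (use xp in auto)
      then have "continuous_on {x/2..s} (\<lambda>f. g f / f)"
        by (rule continuous_on_divide[OF _ continuous_on_id]) (use xp in auto)
      hence c1: "continuous (at x within {x/2..s}) (\<lambda>f. g f / f)"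
        using x xp by (simp add: continuous_on_eq_continuous_within)
      have "at x within {0..s} = at x within {x/2..s}"
        by (rule at_within_nhd[of x "{x/2<..}"]) (use xp in auto)
      hence c2: "continuous (at x within {0..s}) (\<lambda>f. g f / f)" using c1 by simp
      show ?thesis
      proof (rule continuous_transform_within[OF c2 xp x])
        fix x' assume x': "x' \<in> {0..s}" "dist x' x < x"
        then have "x' \<noteq> 0" by (auto simp: dist_real_def)
        then show "g x' / x' = T x'" by (simp add: T_def)
      qed
    next
      case True
      have q: "((\<lambda>y. (m y - m 0) / (y - 0)) \<longlongrightarrow> dm 0) (at 0 within {0..})"
        using md[rule_format, of 0] unfolding has_field_derivative_iff by simp
      hence q': "((\<lambda>y. m y / y) \<longlongrightarrow> dm 0) (at 0 within {0..})" using m0 by simp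
      have "continuous (at 0 within {0..s}) g" using gc s0 by (simp add: continuous_on_eq_continuous_within)
      hence gl: "(g \<longlongrightarrow> 0) (at 0 within {0..s})" using g0 by (simp add: continuous_within)
      have ev: "\<forall>\<^sub>F y in at 0 within {0..s}. y \<in> R \<and> y > 0"
        unfolding eventually_at using Rint[OF s] by (intro exI[of _ 1]) auto
      have "\<forall>\<^sub>F y in at 0 within {0..s}. g y \<in> {0..} \<and> g y \<noteq> 0"
        using ev
      proof eventually_elim
        case (elim y)
        then have "0 < g y" using gpos by blast
        then show ?case by simp
      qed
      hence fl: "filterlim g (at 0 within {0..}) (at 0 within {0..s})"
        using gl filterlim_at by blast
      have "((\<lambda>y. m (g y) / g y) \<longlongrightarrow> dm 0) (at 0 within {0..s})"
        using filterlim_compose[OF q' fl] .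
      hence "((\<lambda>y. inverse (m (g y) / g y)) \<longlongrightarrow> inverse (dm 0)) (at 0 within {0..s})"
        using dm0 by (intro tendsto_inverse) auto
      moreover have "\<forall>\<^sub>F y in at 0 within {0..s}. inverse (m (g y) / g y) = T y"
        using ev by eventually_elim (auto simp: T_def mg)
      ultimately have "(T \<longlongrightarrow> inverse (dm 0)) (at 0 within {0..s})" by (simp add: tendsto_cong)
      then show ?thesis using True unfolding continuous_within by (simp add: T_def inverse_eq_divide)
    qed
  qed
qed

lemma Fderiv: "s \<in> R \<Longrightarrow> (F has_real_derivative T s) (at s within {0..})"
proof -
  assume s: "s \<in> R"
  obtain s' where s': "s' \<in> R" "s < s'" using Rup s by blast
  have "(F has_real_derivative T s) (at s within {0..s'})"
    unfolding F_def[abs_def] using integral_has_real_derivative[OF Tcont[OF s'(1)], of s] s s' Rnn by auto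
  moreover have "at s within {0..} = at s within {0..s'}"
    by (rule at_within_nhd[of s "{..<s'}"]) (use s' in auto)
  ultimately show ?thesis by simp
qed

lemma Ftan1: "x \<in> R \<Longrightarrow> y \<in> R \<Longrightarrow> x < y \<Longrightarrow> \<exists>z. x < z \<and> z < y \<and> F y - F x = (y - x) * T z"
proof -
  assume a: "x \<in> R" "y \<in> R" "x < y"
  have x0: "x \<ge> 0" using Rnn a by simp
  have zR: "z \<in> R" if "x \<le> z" "z \<le> y" for z using Rint[OF a(2)] that x0 by simp
  have "continuous_on {x..y} F"
    unfolding continuous_on_eq_continuous_within
  proof
    fix z assume "z \<in> {x..y}"
    then have "continuous (at z within {0..}) F" using DERIV_continuous[OF Fderiv[OF zR]] by auto
    then show "continuous (at z within {x..y}) F" by (rule continuous_within_subset) (use x0 in auto)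
  qed
  moreover have dz: "DERIV F z :> T z" if "x < z" "z < y" for z
  proof -
    have "at z within {0..} = at z" using that x0 by (intro at_within_interior) simp
    then show ?thesis using Fderiv[OF zR] that by (metis less_imp_le)
  qed
  ultimately obtain l z where z: "x < z" "z < y" "DERIV F z :> l" "F y - F x = (y - x) * l"
    using MVT[OF a(3)] real_differentiable_def by metis
  then show ?thesis using DERIV_unique[OF z(3) dz[OF z(1,2)]] by auto
qed

lemma Ftan: "x \<in> R \<Longrightarrow> y \<in> R \<Longrightarrow> F x + T x * (y - x) \<le> F y"
proof -
  assume a: "x \<in> R" "y \<in> R"
  have x0: "x \<ge> 0" "y \<ge> 0" using Rnn a by auto
  show ?thesis
  proof (cases x y rule: linorder_cases)
    case less
    then obtain z where z: "x < z" "z < y" "F y - F x = (y - x) * T z" using Ftan1 a by blast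
    have "T x \<le> T z" using Tmono[OF a(1) Rint[OF a(2)]] z x0 by simp
    then have "(y - x) * T x \<le> (y - x) * T z" using less by (intro mult_left_mono) auto
    then show ?thesis using z by (simp add: algebra_simps)
  next
    case equal then show ?thesis by simp
  next
    case greater
    then obtain z where z: "y < z" "z < x" "F x - F y = (x - y) * T z" using Ftan1 a by blast
    have "T z \<le> T x" using Tmono[OF Rint[OF a(1)] a(1)] z x0 by simp
    then have "(x - y) * T z \<le> (x - y) * T x" using greater by (simp add: mult_left_mono)
    then show ?thesis using z by (simp add: algebra_simps)
  qed
qed

lemma capR: "0 \<le> s \<Longrightarrow> ereal s < Lim at_top (\<lambda>r. ereal (m r)) \<Longrightarrow> s \<in> R"
proof -
  assume s: "0 \<le> s" "ereal s < Lim at_top (\<lambda>r. ereal (m r))"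
  define S where "S = (SUP r\<in>{0..}. ereal (m r))"
  have "((\<lambda>r. ereal (m r)) \<longlongrightarrow> S) at_top"
  proof (rule order_tendstoI)
    fix a assume "a < S"
    then obtain r where r: "r \<ge> 0" "a < ereal (m r)" unfolding S_def less_SUP_iff by auto
    show "\<forall>\<^sub>F x in at_top. a < ereal (m x)"
      using eventually_ge_at_top[of r]
      by eventually_elim (use r mmono_le in \<open>auto intro: less_le_trans\<close>)
  next
    fix a assume a: "S < a"
    show "\<forall>\<^sub>F x in at_top. ereal (m x) < a"
      using eventually_ge_at_top[of 0]
    proof eventually_elim
      case (elim x)
      then have "ereal (m x) \<le> S" unfolding S_def by (intro SUP_upper) auto
      then show ?case using a by simp
    qed
  qed
  then have "Lim at_top (\<lambda>r. ereal (m r)) = S" by (intro tendsto_Lim) auto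
  then have "ereal s < S" using s(2) by simp
  then obtain r where r: "r \<in> {0..}" "ereal s < ereal (m r)" unfolding S_def less_SUP_iff by blast
  have "m r \<in> R" unfolding R_def using r by auto
  then show ?thesis using Rint[of "m r" s] r s by simp
qed


lemma Fconv: "u \<in> R \<Longrightarrow> v \<in> R \<Longrightarrow> 0 \<le> t \<Longrightarrow> t \<le> 1 \<Longrightarrow>
    F ((1 - t) * u + t * v) \<le> (1 - t) * F u + t * F v"
proof -
  assume a: "u \<in> R" "v \<in> R" "0 \<le> t" "t \<le> 1"
  define w where "w = (1 - t) * u + t * v"
  have u0: "u \<ge> 0" "v \<ge> 0" using Rnn a by auto
  have w0: "0 \<le> w" unfolding w_def using u0 a by simp
  have wR: "w \<in> R"
  proof (cases "u \<le> v")
    case True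
    have "w \<le> v" unfolding w_def using True a convex_bound_le[of u v v "1 - t" t] by simp
    then show ?thesis using Rint[OF a(2) w0] by simp
  next
    case False
    have "w \<le> u" unfolding w_def using False a convex_bound_le[of u u v "1 - t" t] by simp
    then show ?thesis using Rint[OF a(1) w0] by simp
  qed
  have t1: "F w + T w * (u - w) \<le> F u" using Ftan[OF wR a(1)] .
  have t2: "F w + T w * (v - w) \<le> F v" using Ftan[OF wR a(2)] .
  have "(1 - t) * (F w + T w * (u - w)) + t * (F w + T w * (v - w)) \<le> (1 - t) * F u + t * F v"
    using t1 t2 a by (intro add_mono mult_left_mono) auto
  moreover have "(1 - t) * (F w + T w * (u - w)) + t * (F w + T w * (v - w)) = F w"
    unfolding w_def by (simp add: algebra_simps)
  ultimately show ?thesis unfolding w_def by simp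
qed

end


lemma strict_sum: "cvx K L \<Longrightarrow> strict_convex_on K h \<Longrightarrow> strict_convex_on K (\<lambda>x. L x + h x)"
  unfolding strict_convex_on_def
proof (intro ballI impI allI)
  fix x y and t :: real
  assume c: "cvx K L" and s: "\<forall>x\<in>K. \<forall>y\<in>K. x \<noteq> y \<longrightarrow> (\<forall>t. 0 < t \<and> t < 1 \<longrightarrow> h ((1 - t) *\<^sub>R x + t *\<^sub>R y) < (1 - t) * h x + t * h y)"
    and xy: "x \<in> K" "y \<in> K" "x \<noteq> y" and t: "0 < t \<and> t < 1"
  have "L ((1 - t) *\<^sub>R x + t *\<^sub>R y) \<le> (1 - t) * L x + t * L y"
    using c[unfolded cvx_def, rule_format, OF xy(1,2)] t by simp
  moreover have "h ((1 - t) *\<^sub>R x + t *\<^sub>R y) < (1 - t) * h x + t * h y"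
    using s xy t by blast
  ultimately show "L ((1 - t) *\<^sub>R x + t *\<^sub>R y) + h ((1 - t) *\<^sub>R x + t *\<^sub>R y)
      < (1 - t) * (L x + h x) + t * (L y + h y)" by (simp add: algebra_simps)
qed

lemma cvx_lin: "cvx K (\<lambda>x. x \<bullet> c)"
  unfolding cvx_def by (simp add: inner_add_left)

lemma unique_min:
  assumes sc: "strict_convex_on K G" and K: "convex K" and xy: "x \<in> K" "y \<in> K"
    and mx: "\<forall>z\<in>K. G x \<le> G z" and my: "\<forall>z\<in>K. G y \<le> G z"
  shows "x = y"
proof (rule ccontr)
  assume ne: "x \<noteq> y"
  define w where "w = (1 - 1/2::real) *\<^sub>R x + (1/2::real) *\<^sub>R y"
  have "w \<in> K" unfolding w_def using K xy by (simp add: convex_def)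
  moreover have "G w < (1 - 1/2) * G x + (1/2) * G y"
    using sc[unfolded strict_convex_on_def, rule_format, OF xy ne, of "1/2"] unfolding w_def by simp
  ultimately show False using mx my xy by force
qed

lemma strict_min:
  assumes sc: "strict_convex_on K G" and K: "convex K" and xy: "x \<in> K" "y \<in> K"
    and mx: "\<forall>z\<in>K. G x \<le> G z" and ne: "y \<noteq> x"
  shows "G x < G y"
proof -
  have "G x \<le> G y" using mx xy by auto
  moreover have "G x \<noteq> G y"
  proof
    assume "G x = G y"
    then have "\<forall>z\<in>K. G y \<le> G z" using mx by simp
    then show False using unique_min[OF sc K xy mx] ne by simp
  qed
  ultimately show ?thesis by simp
qed

lemma Phi_norm: "norm (Phi v) \<le> norm v" for v :: "real^'p::finite"
proof -
  have "norm (Phi v) ^ 2 = v \<bullet> Phi v" using Phi_self[of v] by (simp add: power2_norm_eq_inner)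
  also have "\<dots> \<le> norm v * norm (Phi v)" by (rule norm_cauchy_schwarz)
  finally have "norm (Phi v) * norm (Phi v) \<le> norm v * norm (Phi v)" by (simp add: power2_eq_square)
  then show ?thesis by (cases "Phi v = 0") auto
qed

lemma simplex_bound: "x \<in> simplexP \<Longrightarrow> norm x \<le> 1"
proof -
  assume x: "x \<in> simplexP"
  have "norm x \<le> (\<Sum>i\<in>UNIV. \<bar>x $ i\<bar>)" by (rule norm_le_l1_cart)
  also have "\<dots> = (\<Sum>i\<in>UNIV. x $ i)" using x by (simp add: simplexP_def)
  also have "\<dots> = 1" using x by (simp add: simplexP_def)
  finally show ?thesis .
qed


locale net =
  fixes E :: "link set" and mu dmu :: "link \<Rightarrow> real \<Rightarrow> real" and pth :: "'p::finite \<Rightarrow> nat list"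
    and Pih :: "(real^'p) set" and h :: "real^'p \<Rightarrow> real" and gh :: "real^'p \<Rightarrow> real^'p"
  assumes finE: "finite E"
  and edges: "\<forall>e\<in>E. edge (mu e) (dmu e)"
  and Pih_closed: "closed Pih" and Pih_convex: "convex Pih" and Pih_sub: "Pih \<subseteq> PiSet E mu pth"
  and Pih_int: "hint Pih \<noteq> {}" and h_strict: "strict_convex_on Pih h"
  and h_grad: "\<forall>x\<in>hint Pih. (h has_derivative (\<lambda>y. gh x \<bullet> y)) (at x within Pih)"
  and h_blowup: "\<forall>b\<in>hbd Pih. filterlim (\<lambda>x. norm (Phi (gh x))) at_top (at b within hint Pih)"
begin

definition a :: "link \<Rightarrow> real^'p" where "a e = (\<chi> p. if e \<in> path_links (pth p) then 1 else 0)"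
definition cvec where "cvec \<pi> = (\<Sum>e\<in>E. delay mu dmu e (\<pi> \<bullet> a e) *\<^sub>R a e)"
definition L where "L \<pi> = (\<Sum>e\<in>E. integral {0..\<pi> \<bullet> a e} (delay mu dmu e))"
definition Gb where "Gb c \<omega> = \<omega> \<bullet> c + h \<omega>"

lemma Aflow_eq: "Aflow pth \<pi> e = \<pi> \<bullet> a e"
  unfolding Aflow_def a_def inner_vec_def by (rule sum.cong) auto

lemma Teq: "e \<in> E \<Longrightarrow> edge.T (mu e) (dmu e) = delay mu dmu e"
proof -
  assume e: "e \<in> E"
  then have ed: "edge (mu e) (dmu e)" using edges by blast
  show ?thesis by (rule ext) (simp add: edge.T_def[OF ed] edge.g_def[OF ed] delay_def)
qed
lemma Feq: "e \<in> E \<Longrightarrow> edge.F (mu e) (dmu e) s = integral {0..s} (delay mu dmu e)"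
proof -
  assume e: "e \<in> E"
  then have ed: "edge (mu e) (dmu e)" using edges by blast
  show ?thesis using Teq[OF e] by (simp add: edge.F_def[OF ed])
qed

lemma Ksimp: "Pih \<subseteq> simplexP" using Pih_sub by (auto simp: PiSet_def)
lemma KH: "Pih \<subseteq> hyperP" using Ksimp by (auto simp: simplexP_def hyperP_def)
lemma Kc: "compact Pih"
proof -
  have "bounded Pih" unfolding bounded_iff using Ksimp simplex_bound by blast
  then show ?thesis using Pih_closed compact_eq_bounded_closed by blast
qed
lemma hK: "hint Pih \<subseteq> Pih" using hint_iff by blast

lemma inner_nn: "\<pi> \<in> Pih \<Longrightarrow> 0 \<le> \<pi> \<bullet> a e"
proof -
  assume p: "\<pi> \<in> Pih"
  have "\<forall>q. 0 \<le> \<pi> $ q" using p Ksimp by (auto simp: simplexP_def)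
  then show ?thesis unfolding inner_vec_def a_def by (intro sum_nonneg) auto
qed

lemma inR: "\<pi> \<in> Pih \<Longrightarrow> e \<in> E \<Longrightarrow> \<pi> \<bullet> a e \<in> edge.R (mu e)"
proof -
  assume p: "\<pi> \<in> Pih" and e: "e \<in> E"
  have "ereal (Aflow pth \<pi> e) < cap mu e" using p e Pih_sub by (auto simp: PiSet_def)
  then have "ereal (\<pi> \<bullet> a e) < Lim at_top (\<lambda>r. ereal (mu e r))" by (simp add: Aflow_eq cap_def)
  then show ?thesis using edge.capR[of "mu e" "dmu e"] edges e inner_nn[OF p] by blast
qed

lemma psi_eq: "psi E mu dmu pth h \<pi> = L \<pi> + h \<pi>"
  unfolding psi_def L_def Aflow_eq ..

lemma br_eq: "br_obj E mu dmu pth h (Aflow pth \<pi>) \<omega> = Gb (cvec \<pi>) \<omega>"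
  unfolding br_obj_def Gb_def cvec_def Aflow_eq
  by (simp add: inner_sum_right mult.commute)

lemma L_cvx: "cvx Pih L"
  unfolding cvx_def
proof (intro ballI allI impI)
  fix x y and t :: real
  assume xy: "x \<in> Pih" "y \<in> Pih" and t: "0 \<le> t \<and> t \<le> 1"
  have "L ((1 - t) *\<^sub>R x + t *\<^sub>R y) = (\<Sum>e\<in>E. edge.F (mu e) (dmu e) ((1 - t) * (x \<bullet> a e) + t * (y \<bullet> a e)))"
    unfolding L_def by (rule sum.cong) (simp_all add: inner_add_left Feq)
  also have "\<dots> \<le> (\<Sum>e\<in>E. (1 - t) * edge.F (mu e) (dmu e) (x \<bullet> a e) + t * edge.F (mu e) (dmu e) (y \<bullet> a e))"
  proof (rule sum_mono)
    fix e assume e: "e \<in> E"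
    show "edge.F (mu e) (dmu e) ((1 - t) * (x \<bullet> a e) + t * (y \<bullet> a e))
        \<le> (1 - t) * edge.F (mu e) (dmu e) (x \<bullet> a e) + t * edge.F (mu e) (dmu e) (y \<bullet> a e)"
      using edge.Fconv[of "mu e" "dmu e"] edges e inR[OF xy(1) e] inR[OF xy(2) e] t by blast
  qed
  also have "\<dots> = (1 - t) * L x + t * L y"
    unfolding L_def by (simp add: sum.distrib sum_distrib_left Feq)
  finally show "L ((1 - t) *\<^sub>R x + t *\<^sub>R y) \<le> (1 - t) * L x + t * L y" .
qed

lemma L_deriv: "\<pi> \<in> Pih \<Longrightarrow> (L has_derivative (\<lambda>y. cvec \<pi> \<bullet> y)) (at \<pi> within Pih)"
proof -
  assume p: "\<pi> \<in> Pih"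
  have tm: "((\<lambda>\<pi>. integral {0..\<pi> \<bullet> a e} (delay mu dmu e)) has_derivative
      (\<lambda>y. delay mu dmu e (\<pi> \<bullet> a e) * (y \<bullet> a e))) (at \<pi> within Pih)" if e: "e \<in> E" for e
  proof -
    have f: "((\<lambda>x. x \<bullet> a e) has_derivative (\<lambda>x. x \<bullet> a e)) (at \<pi> within Pih)"
      using has_derivative_inner_left[OF has_derivative_ident] .
    have "(edge.F (mu e) (dmu e) has_real_derivative delay mu dmu e (\<pi> \<bullet> a e)) (at (\<pi> \<bullet> a e) within {0..})"
      using edge.Fderiv[of "mu e" "dmu e"] edges e inR[OF p e] Teq[OF e] by metis
    then have "(edge.F (mu e) (dmu e) has_derivative (\<lambda>x. delay mu dmu e (\<pi> \<bullet> a e) * x))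
        (at (\<pi> \<bullet> a e) within (\<lambda>x. x \<bullet> a e) ` Pih)"
      unfolding has_field_derivative_def
      by (rule has_derivative_subset) (use inner_nn[where e=e] in auto)
    from diff_chain_within[OF f this] show ?thesis by (simp add: o_def Feq[OF e])
  qed
  have "(L has_derivative (\<lambda>y. \<Sum>e\<in>E. delay mu dmu e (\<pi> \<bullet> a e) * (y \<bullet> a e))) (at \<pi> within Pih)"
    unfolding L_def[abs_def] by (rule has_derivative_sum) (use tm in auto)
  then show ?thesis
    by (rule has_derivative_eq_rhs) (rule ext, simp add: cvec_def inner_sum_left, rule sum.cong, simp_all add: inner_commute)
qed

lemma psi_deriv: "\<pi> \<in> hint Pih \<Longrightarrow> ((\<lambda>\<pi>. L \<pi> + h \<pi>) has_derivative (\<lambda>y. (cvec \<pi> + gh \<pi>) \<bullet> y)) (at \<pi> within Pih)"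
proof -
  assume p: "\<pi> \<in> hint Pih"
  have "((\<lambda>\<pi>. L \<pi> + h \<pi>) has_derivative (\<lambda>y. cvec \<pi> \<bullet> y + gh \<pi> \<bullet> y)) (at \<pi> within Pih)"
    using L_deriv[of \<pi>] p hK h_grad by (intro has_derivative_add) auto
  then show ?thesis by (rule has_derivative_eq_rhs) (simp add: inner_add_left)
qed

lemma Gb_deriv: "\<omega> \<in> hint Pih \<Longrightarrow> (Gb c has_derivative (\<lambda>y. (c + gh \<omega>) \<bullet> y)) (at \<omega> within Pih)"
proof -
  assume p: "\<omega> \<in> hint Pih"
  have "((\<lambda>\<omega>. \<omega> \<bullet> c + h \<omega>) has_derivative (\<lambda>y. y \<bullet> c + gh \<omega> \<bullet> y)) (at \<omega> within Pih)"
    using has_derivative_inner_left[OF has_derivative_ident] p h_grad by (intro has_derivative_add) auto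
  then show ?thesis unfolding Gb_def[abs_def]
    by (rule has_derivative_eq_rhs) (rule ext, simp add: inner_add_left inner_commute[of c])
qed

lemma Gb_sc: "strict_convex_on Pih (Gb c)"
  using strict_sum[OF cvx_lin h_strict, of c] unfolding Gb_def[abs_def] .

lemma cvec_bound: "\<exists>C. \<forall>\<pi>\<in>Pih. norm (cvec \<pi>) \<le> C"
proof -
  obtain z where z: "z \<in> Pih" using Pih_int hK by blast
  have "\<forall>e\<in>E. \<exists>q\<in>Pih. \<forall>\<pi>\<in>Pih. \<pi> \<bullet> a e \<le> q \<bullet> a e"
  proof
    fix e assume e: "e \<in> E"
    have "continuous_on Pih (\<lambda>x. x \<bullet> a e)" by (intro continuous_intros)
    then show "\<exists>q\<in>Pih. \<forall>\<pi>\<in>Pih. \<pi> \<bullet> a e \<le> q \<bullet> a e"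
      using continuous_attains_sup[OF Kc] z by blast
  qed
  then obtain M where M: "\<forall>e\<in>E. M e \<in> Pih \<and> (\<forall>\<pi>\<in>Pih. \<pi> \<bullet> a e \<le> M e \<bullet> a e)"
    by metis
  define C where "C = (\<Sum>e\<in>E. delay mu dmu e (M e \<bullet> a e) * norm (a e))"
  have "norm (cvec \<pi>) \<le> C" if p: "\<pi> \<in> Pih" for \<pi>
  proof -
    have "norm (cvec \<pi>) \<le> (\<Sum>e\<in>E. norm (delay mu dmu e (\<pi> \<bullet> a e) *\<^sub>R a e))"
      unfolding cvec_def by (rule norm_sum)
    also have "\<dots> \<le> C" unfolding C_def
    proof (rule sum_mono)
      fix e assume e: "e \<in> E"
      have ed: "edge (mu e) (dmu e)" using edges e by blast
      have r1: "\<pi> \<bullet> a e \<in> edge.R (mu e)" using inR[OF p e] .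
      have r2: "M e \<bullet> a e \<in> edge.R (mu e)" using inR[of "M e" e] M e by blast
      have le: "\<pi> \<bullet> a e \<le> M e \<bullet> a e" using M e p by blast
      have "0 < delay mu dmu e (\<pi> \<bullet> a e)" using edge.Tpos[OF ed r1] Teq[OF e] by simp
      moreover have "delay mu dmu e (\<pi> \<bullet> a e) \<le> delay mu dmu e (M e \<bullet> a e)"
        using edge.Tmono[OF ed r1 r2 le] Teq[OF e] by simp
      ultimately show "norm (delay mu dmu e (\<pi> \<bullet> a e) *\<^sub>R a e) \<le> delay mu dmu e (M e \<bullet> a e) * norm (a e)"
        by (simp add: mult_right_mono)
    qed
    finally show ?thesis .
  qed
  then show ?thesis by blast
qed

lemma hbd_eq: "hbd Pih = Pih - hint Pih"
proof -
  have "closedin (top_of_set hyperP) Pih" using KH Pih_closed closedin_closed_Int[of Pih hyperP] by (simp add: Int_absorb1 Int_commute)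
  then show ?thesis unfolding hbd_def hint_def frontier_of_def by (simp add: closure_of_closedin)
qed


lemma Phi_zero_inner: "Phi v = 0 \<Longrightarrow> x \<in> Pih \<Longrightarrow> y \<in> Pih \<Longrightarrow> v \<bullet> (x - y) = 0"
proof -
  assume a: "Phi v = 0" "x \<in> Pih" "y \<in> Pih"
  have "Phi v \<bullet> (x - y) = v \<bullet> (x - y)" using hyper_diff a KH by (intro Phi_inner) auto
  then show ?thesis using a by simp
qed

theorem main:
  shows "strict_convex_on Pih (psi E mu dmu pth h) \<and>
    (\<exists>\<pi>h. \<pi>h \<in> Pih \<and> (\<forall>\<pi>\<in>Pih. \<pi> \<noteq> \<pi>h \<longrightarrow> psi E mu dmu pth h \<pi>h < psi E mu dmu pth h \<pi>) \<and>
       \<pi>h \<in> hint Pih \<and>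
       Fh E mu dmu pth Pih h (Aflow pth \<pi>h) = \<pi>h \<and>
       (\<forall>\<pi>\<in>hint Pih.
          let \<omega> = Fh E mu dmu pth Pih h (Aflow pth \<pi>);
              \<Upsilon> = (Phi (gh \<omega>) - Phi (gh \<pi>)) \<bullet> (\<omega> - \<pi>)
          in \<omega> \<in> hint Pih \<and> \<Upsilon> \<ge> 0 \<and> (\<Upsilon> = 0 \<longleftrightarrow> \<pi> = \<pi>h)))"
proof -
  define P where "P = (\<lambda>\<pi>. L \<pi> + h \<pi>)"
  have psiF: "psi E mu dmu pth h = P" unfolding P_def by (rule ext) (simp add: psi_eq)
  have psc: "strict_convex_on Pih P" unfolding P_def using strict_sum[OF L_cvx h_strict] .
  have pcv: "cvx Pih P" using strict_imp_cvx[OF psc] .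
  have blow: "\<forall>b\<in>Pih - hint Pih. filterlim (\<lambda>x. norm (Phi (gh x))) at_top (at b within hint Pih)"
    using h_blowup hbd_eq by simp
  have PD: "\<pi> \<in> hint Pih \<Longrightarrow> (P has_derivative (\<lambda>y. (cvec \<pi> + gh \<pi>) \<bullet> y)) (at \<pi> within Pih)" for \<pi>
    unfolding P_def using psi_deriv .
  obtain C where C: "\<forall>\<pi>\<in>Pih. norm (cvec \<pi>) \<le> C" using cvec_bound by blast
  have Cb: "norm (Phi (gh x)) \<le> norm (Phi (c + gh x)) + norm c" for c x
  proof -
    have "Phi (gh x) = Phi (c + gh x) - Phi c" using Phi_add[of c "gh x"] by simp
    then have "norm (Phi (gh x)) \<le> norm (Phi (c + gh x)) + norm (Phi c)"
      by (metis norm_triangle_ineq4)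
    then show ?thesis using Phi_norm[of c] by simp
  qed
  have "\<exists>x\<in>hint Pih. \<forall>y\<in>Pih. P x \<le> P y"
  proof (rule exists_interior_min[OF Kc Pih_convex KH Pih_int pcv _ _ blow])
    show "\<forall>x\<in>hint Pih. (P has_derivative (\<lambda>y. (cvec x + gh x) \<bullet> y)) (at x within Pih)" using PD by blast
    show "\<forall>x\<in>hint Pih. norm (Phi (gh x)) \<le> norm (Phi (cvec x + gh x)) + C"
      using Cb C hK by (meson add_left_mono order_trans subsetD)
  qed
  then obtain \<pi>h where ph: "\<pi>h \<in> hint Pih" and phm: "\<forall>y\<in>Pih. P \<pi>h \<le> P y" by blast
  have phK: "\<pi>h \<in> Pih" using ph hK by auto
  have strictm: "\<forall>\<pi>\<in>Pih. \<pi> \<noteq> \<pi>h \<longrightarrow> P \<pi>h < P \<pi>"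
    using strict_min[OF psc Pih_convex phK _ phm] by blast
  have Gmin: "\<exists>\<omega>\<in>hint Pih. \<forall>y\<in>Pih. Gb c \<omega> \<le> Gb c y" for c
  proof (rule exists_interior_min[OF Kc Pih_convex KH Pih_int strict_imp_cvx[OF Gb_sc] _ _ blow])
    show "\<forall>x\<in>hint Pih. (Gb c has_derivative (\<lambda>y. (c + gh x) \<bullet> y)) (at x within Pih)"
      using Gb_deriv by blast
    show "\<forall>x\<in>hint Pih. norm (Phi (gh x)) \<le> norm (Phi (c + gh x)) + norm c" using Cb by blast
  qed
  have Fh_eq: "Fh E mu dmu pth Pih h (Aflow pth \<pi>) = \<omega>"
    if "\<omega> \<in> Pih" "\<forall>y\<in>Pih. Gb (cvec \<pi>) \<omega> \<le> Gb (cvec \<pi>) y" for \<pi> \<omega>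
    unfolding Fh_def br_eq
  proof (rule the_equality)
    show "\<omega> \<in> Pih \<and> (\<forall>\<omega>'\<in>Pih. Gb (cvec \<pi>) \<omega> \<le> Gb (cvec \<pi>) \<omega>')" using that by blast
    fix \<omega>' assume "\<omega>' \<in> Pih \<and> (\<forall>\<omega>''\<in>Pih. Gb (cvec \<pi>) \<omega>' \<le> Gb (cvec \<pi>) \<omega>'')"
    then show "\<omega>' = \<omega>" using unique_min[OF Gb_sc Pih_convex] that by blast
  qed
  have stat: "Phi (c + gh \<omega>) = 0" if "\<omega> \<in> hint Pih" "\<forall>y\<in>Pih. Gb c \<omega> \<le> Gb c y" for c \<omega>
    using interior_min_stationary[OF KH that(1) that(2) Gb_deriv[OF that(1)]] .
  have phst: "Phi (cvec \<pi>h + gh \<pi>h) = 0"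
    using interior_min_stationary[OF KH ph phm PD[OF ph]] .
  have fix_ph: "Fh E mu dmu pth Pih h (Aflow pth \<pi>h) = \<pi>h"
  proof (rule Fh_eq[OF phK])
    show "\<forall>y\<in>Pih. Gb (cvec \<pi>h) \<pi>h \<le> Gb (cvec \<pi>h) y"
    proof
      fix y assume y: "y \<in> Pih"
      have "Gb (cvec \<pi>h) \<pi>h + (cvec \<pi>h + gh \<pi>h) \<bullet> (y - \<pi>h) \<le> Gb (cvec \<pi>h) y"
        using tangent_ineq[OF Pih_convex phK y strict_imp_cvx[OF Gb_sc] Gb_deriv[OF ph]] .
      then show "Gb (cvec \<pi>h) \<pi>h \<le> Gb (cvec \<pi>h) y" using Phi_zero_inner[OF phst y phK] by simp
    qed
  qed
  have part: "let \<omega> = Fh E mu dmu pth Pih h (Aflow pth \<pi>);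
              \<Upsilon> = (Phi (gh \<omega>) - Phi (gh \<pi>)) \<bullet> (\<omega> - \<pi>)
          in \<omega> \<in> hint Pih \<and> \<Upsilon> \<ge> 0 \<and> (\<Upsilon> = 0 \<longleftrightarrow> \<pi> = \<pi>h)" if p: "\<pi> \<in> hint Pih" for \<pi>
  proof -
    have pK: "\<pi> \<in> Pih" using p hK by auto
    define c where "c = cvec \<pi>"
    obtain \<omega> where w: "\<omega> \<in> hint Pih" and wm: "\<forall>y\<in>Pih. Gb c \<omega> \<le> Gb c y" using Gmin by blast
    have wK: "\<omega> \<in> Pih" using w hK by auto
    have Fw: "Fh E mu dmu pth Pih h (Aflow pth \<pi>) = \<omega>" using Fh_eq[OF wK] wm c_def by simp
    define U where "U = (Phi (gh \<omega>) - Phi (gh \<pi>)) \<bullet> (\<omega> - \<pi>)"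
    have st: "Phi (c + gh \<omega>) = 0" using stat[OF w wm] .
    have "Phi (gh \<omega>) - Phi (gh \<pi>) = - Phi (c + gh \<pi>)"
      using st Phi_add[of c "gh \<omega>"] Phi_add[of c "gh \<pi>"] by (simp add: algebra_simps eq_neg_iff_add_eq_0)
    moreover have "Phi (c + gh \<pi>) \<bullet> (\<omega> - \<pi>) = (c + gh \<pi>) \<bullet> (\<omega> - \<pi>)"
      using hyper_diff[of \<omega> \<pi>] wK pK KH by (intro Phi_inner) auto
    ultimately have U_eq: "U = - ((c + gh \<pi>) \<bullet> (\<omega> - \<pi>))"
      unfolding U_def by simp
    have mn: "\<omega> \<bullet> c + h \<omega> \<le> \<pi> \<bullet> c + h \<pi>" using wm pK unfolding Gb_def by blast
    have tg: "h \<pi> + gh \<pi> \<bullet> (\<omega> - \<pi>) \<le> h \<omega>"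
      using tangent_ineq[OF Pih_convex pK wK strict_imp_cvx[OF h_strict]] h_grad p by blast
    have expand: "(c + gh \<pi>) \<bullet> (\<omega> - \<pi>) = (\<omega> \<bullet> c - \<pi> \<bullet> c) + gh \<pi> \<bullet> (\<omega> - \<pi>)"
      by (simp add: inner_add_left inner_add_right inner_diff_left inner_diff_right inner_commute)
    have U0: "U \<ge> 0" using U_eq expand mn tg by linarith
    have Upos: "U > 0" if ne: "\<omega> \<noteq> \<pi>"
    proof -
      have "h \<pi> + gh \<pi> \<bullet> (\<omega> - \<pi>) < h \<omega>"
        using tangent_strict[OF Pih_convex pK wK ne h_strict] h_grad p by blast
      then show ?thesis using U_eq expand mn by linarith
    qed
    have iff: "U = 0 \<longleftrightarrow> \<pi> = \<pi>h"
    proof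
      assume "U = 0"
      then have eq: "\<omega> = \<pi>" using Upos by force
      then have st2: "Phi (cvec \<pi> + gh \<pi>) = 0" using st c_def by simp
      have "\<forall>y\<in>Pih. P \<pi> \<le> P y"
      proof
        fix y assume y: "y \<in> Pih"
        have "P \<pi> + (cvec \<pi> + gh \<pi>) \<bullet> (y - \<pi>) \<le> P y"
          using tangent_ineq[OF Pih_convex pK y pcv PD[OF p]] .
        then show "P \<pi> \<le> P y" using Phi_zero_inner[OF st2 y pK] by simp
      qed
      then show "\<pi> = \<pi>h" using unique_min[OF psc Pih_convex pK phK _ phm] by blast
    next
      assume "\<pi> = \<pi>h"
      then have "\<omega> = \<pi>" using Fw fix_ph by simp
      then show "U = 0" unfolding U_def by simp
    qed
    show ?thesis unfolding Let_def Fw U_def[symmetric] using w U0 iff by blast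
  qed
  show ?thesis
    unfolding psiF using psc phK strictm ph fix_ph part by blast
qed

end


theorem mainTheorem12:
  fixes n :: nat and E :: "link set"
    and mu dmu :: "link \<Rightarrow> real \<Rightarrow> real"
    and pth :: "'p::finite \<Rightarrow> nat list"
    and Pih :: "(real^'p) set" and h :: "real^'p \<Rightarrow> real" and gh :: "real^'p \<Rightarrow> real^'p"
  assumes E_sub: "E \<subseteq> {0..n} \<times> {0..n}"
    and E_ord: "\<forall>(u,v)\<in>E. u < v"
    and src: "\<forall>v\<in>{0..n}. (\<not> (\<exists>u. (u,v) \<in> E)) \<longleftrightarrow> v = 0"
    and snk: "\<forall>u\<in>{0..n}. (\<not> (\<exists>v. (u,v) \<in> E)) \<longleftrightarrow> u = n"
    and reach: "\<forall>v\<in>{0..n}. (v, n) \<in> E\<^sup>*"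
    and mu_deriv: "\<forall>e\<in>E. \<forall>x\<ge>0. (mu e has_real_derivative dmu e x) (at x within {0..})"
    and dmu_cont: "\<forall>e\<in>E. continuous_on {0..} (dmu e)"
    and mu_mono: "\<forall>e\<in>E. strict_mono_on {0..} (mu e)"
    and mu_concave: "\<forall>e\<in>E. strict_concave_on {0..} (mu e)"
    and mu_zero: "\<forall>e\<in>E. mu e 0 = 0"
    and mincut_gt: "mincut E n mu > 1"
    and pth_bij: "bij_betw pth UNIV (Paths E n)"
    and Pih_closed: "closed Pih"
    and Pih_convex: "convex Pih"
    and Pih_sub: "Pih \<subseteq> PiSet E mu pth"
    and Pih_int: "hint Pih \<noteq> {}"
    and h_strict: "strict_convex_on Pih h"
    and h_grad: "\<forall>x\<in>hint Pih. (h has_derivative (\<lambda>y. gh x \<bullet> y)) (at x within Pih)"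
    and h_twice: "\<forall>x\<in>hint Pih. gh differentiable (at x within Pih)"
    and h_blowup: "\<forall>b\<in>hbd Pih. filterlim (\<lambda>x. norm (Phi (gh x))) at_top (at b within hint Pih)"
  shows "strict_convex_on Pih (psi E mu dmu pth h) \<and>
    (\<exists>\<pi>h. \<pi>h \<in> Pih \<and> (\<forall>\<pi>\<in>Pih. \<pi> \<noteq> \<pi>h \<longrightarrow> psi E mu dmu pth h \<pi>h < psi E mu dmu pth h \<pi>) \<and>
       \<pi>h \<in> hint Pih \<and>
       Fh E mu dmu pth Pih h (Aflow pth \<pi>h) = \<pi>h \<and>
       (\<forall>\<pi>\<in>hint Pih.
          let \<omega> = Fh E mu dmu pth Pih h (Aflow pth \<pi>);
              \<Upsilon> = (Phi (gh \<omega>) - Phi (gh \<pi>)) \<bullet> (\<omega> - \<pi>)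
          in \<omega> \<in> hint Pih \<and> \<Upsilon> \<ge> 0 \<and> (\<Upsilon> = 0 \<longleftrightarrow> \<pi> = \<pi>h)))"
  proof -
  have finE: "finite E" using E_sub finite_subset[of E "{0..n} \<times> {0..n}"] by simp
  have edges: "\<forall>e\<in>E. edge (mu e) (dmu e)"
    using mu_deriv mu_mono mu_concave mu_zero by (auto simp: edge_def)
  interpret net E mu dmu pth Pih h gh
    using finE edges Pih_closed Pih_convex Pih_sub Pih_int h_strict h_grad h_blowup
    by (unfold_locales) auto
  show ?thesis using main .
qed

end
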